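(* Let $T>0$, $I=[0,T]$, $\nu_1,\nu_2\in\mathbb{R}$, $p>1$. Let $\Phi:\mathbb{R}\to\mathbb{R}$ be a strictly increasing homeomorphism; let $A:W^{1,p}(I)\to C(I,\mathbb{R})$, $x\mapsto A_x$, be continuous w.r.t. the uniform topology, with $h_1,h_2\in C(I,\mathbb{R})$, $h_1,h_2\ge0$, $1/h_1,1/h_2\in L^p(I)$ and $h_1\le A_x\le h_2$ on $I$ for all $x$; let $F:W^{1,p}(I)\to L^1(I)$ be continuous with $|F_x(t)|\le\psi(t)$ for all $x$ and a.e. $t$, for some non-negative $\psi\in L^1(I)$. Then the operator $\mathcal{P}:W^{1,p}(I)\to W^{1,p}(I)$ defined in the context is continuous (with respect to the $W^{1,p}$ norm).
   Context: $\mathcal{F}_x(t):=\int_0^tF_x(s)\,ds$. For $x\in W^{1,p}(I)$, $\xi_x$ is the unique real number with $\int_0^T\frac{1}{A_x(t)}\Phi^{-1}(\xi_x+\mathcal{F}_x(t))\,dt=\nu_2-\nu_1$ (it exists and is unique under these hypotheses). $\mathcal{P}_x(t):=\nu_1+\int_0^t\frac{1}{A_x(s)}\Phi^{-1}(\xi_x+\mathcal{F}_x(s))\,ds$. *)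

theory Defs
  imports "HOL-Analysis.Analysis"
begin

text \<open>Functions on I = [0,T] are represented as total functions real \<Rightarrow> real;
  only their values on {0..T} matter.\<close>

definition Lp :: "real \<Rightarrow> real \<Rightarrow> (real \<Rightarrow> real) \<Rightarrow> bool" where
  "Lp T p g \<longleftrightarrow> set_borel_measurable lborel {0..T} g \<and>
      set_integrable lborel {0..T} (\<lambda>t. \<bar>g t\<bar> powr p)"

definition Lp_norm :: "real \<Rightarrow> real \<Rightarrow> (real \<Rightarrow> real) \<Rightarrow> real" where
  "Lp_norm T p g = (LINT t:{0..T}|lborel. \<bar>g t\<bar> powr p) powr (1 / p)"

text \<open>W^{1,p}(I): (continuous representatives of) functions that are primitives of an L^p function.\<close>
definition is_wderiv :: "real \<Rightarrow> real \<Rightarrow> (real \<Rightarrow> real) \<Rightarrow> (real \<Rightarrow> real) \<Rightarrow> bool" where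
  "is_wderiv T p x g \<longleftrightarrow> Lp T p g \<and>
      (\<forall>t\<in>{0..T}. x t = x 0 + (LINT s:{0..t}|lborel. g s))"

definition W1p :: "real \<Rightarrow> real \<Rightarrow> (real \<Rightarrow> real) \<Rightarrow> bool" where
  "W1p T p x \<longleftrightarrow> (\<exists>g. is_wderiv T p x g)"

definition wderiv :: "real \<Rightarrow> real \<Rightarrow> (real \<Rightarrow> real) \<Rightarrow> (real \<Rightarrow> real)" where
  "wderiv T p x = (SOME g. is_wderiv T p x g)"

definition W1p_norm :: "real \<Rightarrow> real \<Rightarrow> (real \<Rightarrow> real) \<Rightarrow> real" where
  "W1p_norm T p x = Lp_norm T p x + Lp_norm T p (wderiv T p x)"

definition L1_norm :: "real \<Rightarrow> (real \<Rightarrow> real) \<Rightarrow> real" where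
  "L1_norm T g = (LINT t:{0..T}|lborel. \<bar>g t\<bar>)"

definition calF :: "((real \<Rightarrow> real) \<Rightarrow> (real \<Rightarrow> real)) \<Rightarrow> (real \<Rightarrow> real) \<Rightarrow> real \<Rightarrow> real" where
  "calF F x t = (LINT s:{0..t}|lborel. F x s)"

definition xi :: "real \<Rightarrow> (real \<Rightarrow> real) \<Rightarrow> ((real \<Rightarrow> real) \<Rightarrow> (real \<Rightarrow> real))
    \<Rightarrow> ((real \<Rightarrow> real) \<Rightarrow> (real \<Rightarrow> real)) \<Rightarrow> real \<Rightarrow> real \<Rightarrow> (real \<Rightarrow> real) \<Rightarrow> real" where
  "xi T \<Phi> A F \<nu>1 \<nu>2 x = (THE \<xi>.
     (LINT t:{0..T}|lborel. (1 / A x t) * inv \<Phi> (\<xi> + calF F x t)) = \<nu>2 - \<nu>1)"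

definition calP :: "real \<Rightarrow> (real \<Rightarrow> real) \<Rightarrow> ((real \<Rightarrow> real) \<Rightarrow> (real \<Rightarrow> real))
    \<Rightarrow> ((real \<Rightarrow> real) \<Rightarrow> (real \<Rightarrow> real)) \<Rightarrow> real \<Rightarrow> real \<Rightarrow> (real \<Rightarrow> real) \<Rightarrow> real \<Rightarrow> real" where
  "calP T \<Phi> A F \<nu>1 \<nu>2 x t = \<nu>1 +
     (LINT s:{0..t}|lborel. (1 / A x s) * inv \<Phi> (xi T \<Phi> A F \<nu>1 \<nu>2 x + calF F x s))"

end

theory Submission
  imports Defs
begin


lemma sbm_iff: "set_borel_measurable lborel {a..b::real} (f::real\<Rightarrow>real) \<longleftrightarrow> f \<in> borel_measurable (restrict_space lborel {a..b})"
  unfolding set_borel_measurable_def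
  using borel_measurable_restrict_space_iff[of "{a..b}" lborel f] by simp

lemma Lp_L1:
  assumes "p \<ge> 1" "Lp T p g"
  shows "set_integrable lborel {0..T} g"
proof -
  have m: "set_borel_measurable lborel {0..T} g" and i: "set_integrable lborel {0..T} (\<lambda>t. \<bar>g t\<bar> powr p)"
    using assms unfolding Lp_def by auto
  have c: "set_integrable lborel {0..T} (\<lambda>t. 1::real)"
    unfolding set_integrable_def by (simp add: integrable_indicator_iff[symmetric] emeasure_lborel_Icc_eq)
  have "set_integrable lborel {0..T} (\<lambda>t. 1 + \<bar>g t\<bar> powr p)"
    using set_integral_add(1)[OF c i] by simp
  moreover have "norm (g t) \<le> norm (1 + \<bar>g t\<bar> powr p)" for t
  proof -
    have a: "0 \<le> \<bar>g t\<bar> powr p" by simp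
    have "\<bar>g t\<bar> \<le> 1 + \<bar>g t\<bar> powr p"
    proof (cases "\<bar>g t\<bar> \<le> 1")
      case True
      then show ?thesis using a by (smt (verit))
    next
      case False
      then have "\<bar>g t\<bar> powr 1 \<le> \<bar>g t\<bar> powr p" using assms(1) by (intro powr_mono) auto
      then show ?thesis using False by auto
    qed
    then show ?thesis using a by simp
  qed
  ultimately show ?thesis by (intro set_integrable_bound[OF _ m]) auto
qed

lemma indef_cont:
  assumes "set_integrable lborel {0..T} (f::real\<Rightarrow>real)"
  shows "continuous_on {0..T} (\<lambda>t. LINT s:{0..t}|lborel. f s)"
proof -
  have "f integrable_on {0..T}" using set_borel_integral_eq_integral(1)[OF assms] .
  then have "continuous_on {0..T} (\<lambda>t. integral {0..t} f)" by (rule indefinite_integral_continuous_1)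
  moreover have "(LINT s:{0..t}|lborel. f s) = integral {0..t} f" if "t \<in> {0..T}" for t
    using that by (intro set_borel_integral_eq_integral(2) set_integrable_subset[OF assms]) auto
  ultimately show ?thesis using continuous_on_cong by (metis (no_types, lifting))
qed

lemma LINT_point: "(LINT s:{a}|lborel. (f s::real)) = 0"
  unfolding set_lebesgue_integral_def
  by (rule integral_eq_zero_AE) (use AE_lborel_singleton[of a] in \<open>auto elim!: eventually_mono\<close>)

lemma ae_zero_of_int_zero:
  fixes \<phi> :: "real \<Rightarrow> real"
  assumes T: "0 \<le> T" and i: "set_integrable lborel {0..T} \<phi>"
    and z: "\<forall>t\<in>{0..T}. (LINT s:{0..t}|lborel. \<phi> s) = 0"
  shows "AE t in lborel. t \<in> {0..T} \<longrightarrow> \<phi> t = 0"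
proof -
  define u where "u t = indicator {0..T} t * \<phi> t" for t
  have iu: "integrable lborel u" using i unfolding u_def set_integrable_def by simp
  then have [measurable]: "u \<in> borel_measurable lborel" by auto
  define P where "P t = max (u t) 0" for t
  define N where "N t = max (- u t) 0" for t
  have iP: "integrable lborel P" unfolding P_def using iu by auto
  have iN: "integrable lborel N" unfolding N_def using iu by auto
  have [measurable]: "P \<in> borel_measurable lborel" "N \<in> borel_measurable lborel"
    using iP iN by auto
  have key: "integral\<^sup>L lborel (\<lambda>t. indicator {x<..} t * u t) = 0" for x
  proof (cases "x < 0")
    case True
    have "(\<lambda>t. indicator {x<..} t * u t) = (\<lambda>t. indicator {0..T} t * \<phi> t)"
      using True by (auto simp: u_def indicator_def)
    then show ?thesis using z T by (auto simp: set_lebesgue_integral_def)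
  next
    case False
    show ?thesis
    proof (cases "x < T")
      case True
      have e: "(\<lambda>t. indicator {x<..} t * u t) = (\<lambda>t. indicator {0..T} t * \<phi> t - indicator {0..x} t * \<phi> t)"
        using True False by (auto simp: u_def indicator_def)
      have "set_integrable lborel {0..x} \<phi>" using True by (intro set_integrable_subset[OF i]) auto
      then have "integral\<^sup>L lborel (\<lambda>t. indicator {0..T} t * \<phi> t - indicator {0..x} t * \<phi> t)
         = (LINT s:{0..T}|lborel. \<phi> s) - (LINT s:{0..x}|lborel. \<phi> s)"
        using i by (simp add: set_lebesgue_integral_def set_integrable_def)
      also have "\<dots> = 0" using z True False T by auto
      finally show ?thesis using e by simp
    next
      case False2: False
      have "(\<lambda>t. indicator {x<..} t * u t) = (\<lambda>t. 0)"
        using False2 by (auto simp: u_def indicator_def)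
      then show ?thesis by simp
    qed
  qed
  have em: "emeasure (density lborel (\<lambda>t. ennreal (f t))) {x<..} = ennreal (integral\<^sup>L lborel (\<lambda>t. indicator {x<..} t * f t))"
    if "integrable lborel f" "\<And>t. f t \<ge> 0" for f and x :: real
  proof -
    have [measurable]: "f \<in> borel_measurable lborel" using that by auto
    have "emeasure (density lborel (\<lambda>t. ennreal (f t))) {x<..} = (\<integral>\<^sup>+ t. ennreal (f t) * indicator {x<..} t \<partial>lborel)"
      by (rule emeasure_density) (auto intro: borel_open)
    also have "\<dots> = (\<integral>\<^sup>+ t. ennreal (indicator {x<..} t * f t) \<partial>lborel)"
      by (intro nn_integral_cong) (auto simp: indicator_def)
    also have "\<dots> = ennreal (integral\<^sup>L lborel (\<lambda>t. indicator {x<..} t * f t))"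
      using that by (intro nn_integral_eq_integral) (auto intro!: integrable_mult_indicator[where 'b=real, simplified])
    finally show ?thesis .
  qed
  have PN: "integral\<^sup>L lborel (\<lambda>t. indicator {x<..} t * P t) = integral\<^sup>L lborel (\<lambda>t. indicator {x<..} t * N t)" for x
  proof -
    have "integrable lborel (\<lambda>t. indicator {x<..} t * P t)" "integrable lborel (\<lambda>t. indicator {x<..} t * N t)"
      using iP iN by (auto intro!: integrable_mult_indicator[where 'b=real, simplified])
    moreover have "(\<lambda>t. indicator {x<..} t * u t) = (\<lambda>t. indicator {x<..} t * P t - indicator {x<..} t * N t)"
      by (auto simp: P_def N_def max_def)
    ultimately show ?thesis using key[of x] by simp
  qed
  have "density lborel (\<lambda>t. ennreal (P t)) = density lborel (\<lambda>t. ennreal (N t))"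
  proof (rule measure_eqI_lessThan)
    show "emeasure (density lborel (\<lambda>t. ennreal (P t))) {x<..} < \<infinity>" for x
      using em[OF iP] by (auto simp: P_def)
    show "emeasure (density lborel (\<lambda>t. ennreal (P t))) {x<..} = emeasure (density lborel (\<lambda>t. ennreal (N t))) {x<..}" for x
      using em[OF iP, of x] em[OF iN, of x] PN[of x] by (auto simp: P_def N_def)
  qed auto
  then have "AE t in lborel. ennreal (P t) = ennreal (N t)"
    by (intro sigma_finite_measure.density_unique[OF sigma_finite_lborel]) auto
  then show ?thesis
  proof (rule eventually_mono)
    fix t assume "ennreal (P t) = ennreal (N t)"
    then have "P t = N t" by (auto simp: P_def N_def)
    then show "t \<in> {0..T} \<longrightarrow> \<phi> t = 0" by (auto simp: P_def N_def u_def max_def split: if_splits)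
  qed
qed

lemma dct_Lq:
  fixes f :: "nat \<Rightarrow> real \<Rightarrow> real" and f0 B :: "real \<Rightarrow> real"
  assumes q: "q > 0"
   and mf: "\<And>n. f n \<in> borel_measurable (restrict_space lborel {0..T})"
   and mf0: "f0 \<in> borel_measurable (restrict_space lborel {0..T})"
   and bn: "\<And>n. AE t in lborel. t \<in> {0..T} \<longrightarrow> \<bar>f n t\<bar> \<le> B t"
   and b0: "AE t in lborel. t \<in> {0..T} \<longrightarrow> \<bar>f0 t\<bar> \<le> B t"
   and iB: "set_integrable lborel {0..T} (\<lambda>t. B t powr q)"
   and lim: "AE t in lborel. t \<in> {0..T} \<longrightarrow> (\<lambda>n. f n t) \<longlonglongrightarrow> f0 t"
  shows "(\<lambda>n. LINT t:{0..T}|lborel. \<bar>f n t - f0 t\<bar> powr q) \<longlonglongrightarrow> 0"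
proof -
  let ?s = "\<lambda>n t. indicator {0..T} t *\<^sub>R (\<bar>f n t - f0 t\<bar> powr q)"
  let ?w = "\<lambda>t. indicator {0..T} t *\<^sub>R (2 powr q * B t powr q)"
  have "(\<lambda>n. integral\<^sup>L lborel (?s n)) \<longlonglongrightarrow> integral\<^sup>L lborel (\<lambda>t::real. 0::real)"
  proof (rule integral_dominated_convergence[where w="?w" and s="?s" and f="\<lambda>t. 0"])
    show "?s n \<in> borel_measurable lborel" for n
    proof -
      have "(\<lambda>t. \<bar>f n t - f0 t\<bar> powr q) \<in> borel_measurable (restrict_space lborel {0..T})"
        using mf[of n] mf0 by measurable
      then show ?thesis by (subst (asm) borel_measurable_restrict_space_iff) auto
    qed
    show "integrable lborel ?w"
      using iB unfolding set_integrable_def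
      by (simp add: mult.left_commute[of "indicator _ _"])
    show "AE t in lborel. (\<lambda>n. ?s n t) \<longlonglongrightarrow> 0"
      using lim
    proof (rule eventually_mono)
      fix t assume h: "t \<in> {0..T} \<longrightarrow> (\<lambda>n. f n t) \<longlonglongrightarrow> f0 t"
      show "(\<lambda>n. ?s n t) \<longlonglongrightarrow> 0"
      proof (cases "t \<in> {0..T}")
        case True
        then have "(\<lambda>n. \<bar>f n t - f0 t\<bar>) \<longlonglongrightarrow> 0"
          using h tendsto_diff[of "\<lambda>n. f n t" "f0 t" sequentially "\<lambda>n. f0 t" "f0 t"]
          by (auto intro: tendsto_rabs_zero)
        then have "(\<lambda>n. \<bar>f n t - f0 t\<bar> powr q) \<longlonglongrightarrow> 0"
          using q by (intro tendsto_zero_powrI) auto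
        then show ?thesis using True by simp
      qed simp
    qed
    show "AE t in lborel. norm (?s n t) \<le> ?w t" for n
      using bn[of n] b0
    proof (eventually_elim)
      case (elim t)
      show ?case
      proof (cases "t \<in> {0..T}")
        case True
        then have a: "\<bar>f n t\<bar> \<le> B t" "\<bar>f0 t\<bar> \<le> B t" using elim by auto
        then have "\<bar>f n t - f0 t\<bar> \<le> 2 * B t" by linarith
        then have "\<bar>f n t - f0 t\<bar> powr q \<le> (2 * B t) powr q"
          using q by (intro powr_mono2) auto
        also have "\<dots> = 2 powr q * B t powr q"
          using a by (subst powr_mult) auto
        finally show ?thesis using True by simp
      qed simp
    qed
  qed simp
  then show ?thesis by (simp add: set_lebesgue_integral_def)
qed

lemma cont_meas: "continuous_on {a..b} f \<Longrightarrow> (f::real\<Rightarrow>real) \<in> borel_measurable (restrict_space lborel {a..b::real})"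
  by (metis borel_measurable_continuous_on_restrict measurable_cong_sets sets_lborel sets_restrict_space_cong)

lemma set_int_abs_le:
  assumes "set_integrable lborel {0..T} (g::real\<Rightarrow>real)" "t \<in> {0..T}"
  shows "\<bar>LINT s:{0..t}|lborel. g s\<bar> \<le> (LINT s:{0..T}|lborel. \<bar>g s\<bar>)"
proof -
  have i1: "set_integrable lborel {0..t} g" using assms by (intro set_integrable_subset[OF assms(1)]) auto
  have "\<bar>LINT s:{0..t}|lborel. g s\<bar> \<le> (LINT s:{0..t}|lborel. \<bar>g s\<bar>)"
    using set_integral_norm_bound[OF i1] by simp
  also have "\<dots> \<le> (LINT s:{0..T}|lborel. \<bar>g s\<bar>)"
  proof -
    have "integrable lborel (\<lambda>s. indicator {0..t} s * \<bar>g s\<bar>)" "integrable lborel (\<lambda>s. indicator {0..T} s * \<bar>g s\<bar>)"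
      using set_integrable_abs[OF i1] set_integrable_abs[OF assms(1)] unfolding set_integrable_def by auto
    then show ?thesis unfolding set_lebesgue_integral_def
      using assms(2) by (intro integral_mono) (auto simp: indicator_def)
  qed
  finally show ?thesis .
qed

lemma pos_integral:
  assumes T: "T > 0" and i: "set_integrable lborel {0..T} (d::real\<Rightarrow>real)"
    and pos: "AE t in lborel. t \<in> {0..T} \<longrightarrow> d t > 0"
  shows "(LINT t:{0..T}|lborel. d t) > 0"
proof -
  have nn: "(LINT t:{0..T}|lborel. d t) \<ge> 0"
    unfolding set_lebesgue_integral_def
    by (rule integral_nonneg_AE) (use pos in \<open>auto elim!: eventually_mono simp: indicator_def\<close>)
  have ne: "(LINT t:{0..T}|lborel. d t) \<noteq> 0"
  proof
    assume z: "(LINT t:{0..T}|lborel. d t) = 0"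
    have "{0..T} \<in> null_sets lborel"
    proof (rule null_if_pos_func_has_zero_int[where f="\<lambda>t. indicator {0..T} t * d t"])
      show "integrable lborel (\<lambda>t. indicator {0..T} t * d t)" using i unfolding set_integrable_def by simp
      show "AE x\<in>{0..T} in lborel. 0 < indicator {0..T} x * d x"
        using pos by (auto elim!: eventually_mono)
      show "(LINT x:{0..T}|lborel. indicator {0..T} x * d x) = 0"
      proof -
        have "(\<lambda>x. indicator {0..T} x *\<^sub>R (indicator {0..T} x * d x)) = (\<lambda>x. indicator {0..T} x *\<^sub>R d x)"
          by (auto simp: indicator_def)
        then show ?thesis using z unfolding set_lebesgue_integral_def by simp
      qed
    qed auto
    then show False using T by (auto simp: emeasure_lborel_Icc_eq null_sets_def)
  qed
  show ?thesis using nn ne by linarith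
qed


locale setting =
  fixes T p \<nu>1 \<nu>2 :: real
    and \<Phi> :: "real \<Rightarrow> real"
    and A F :: "(real \<Rightarrow> real) \<Rightarrow> (real \<Rightarrow> real)"
    and h1 h2 \<psi> :: "real \<Rightarrow> real"
  assumes T: "T > 0" and p: "p > 1"
    and Phi_mono: "strict_mono \<Phi>"
    and Phi_homeo: "homeomorphism UNIV UNIV \<Phi> (inv \<Phi>)"
    and A_cont_fun: "\<And>x. W1p T p x \<Longrightarrow> continuous_on {0..T} (A x)"
    and A_cont: "\<And>x \<epsilon>. W1p T p x \<Longrightarrow> \<epsilon> > 0 \<Longrightarrow> \<exists>\<delta>>0. \<forall>y. W1p T p y \<and>
                   W1p_norm T p (\<lambda>t. y t - x t) < \<delta> \<longrightarrow> (\<forall>t\<in>{0..T}. \<bar>A y t - A x t\<bar> < \<epsilon>)"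
    and h1_pos: "AE t in lborel. t \<in> {0..T} \<longrightarrow> h1 t > 0"
    and h2_pos: "AE t in lborel. t \<in> {0..T} \<longrightarrow> h2 t > 0"
    and h1_inv: "Lp T p (\<lambda>t. 1 / h1 t)" and h2_inv: "Lp T p (\<lambda>t. 1 / h2 t)"
    and A_bounds: "\<And>x t. W1p T p x \<Longrightarrow> t \<in> {0..T} \<Longrightarrow> h1 t \<le> A x t \<and> A x t \<le> h2 t"
    and F_L1: "\<And>x. W1p T p x \<Longrightarrow> set_integrable lborel {0..T} (F x)"
    and F_cont: "\<And>x \<epsilon>. W1p T p x \<Longrightarrow> \<epsilon> > 0 \<Longrightarrow> \<exists>\<delta>>0. \<forall>y. W1p T p y \<and>
                   W1p_norm T p (\<lambda>t. y t - x t) < \<delta> \<longrightarrow> L1_norm T (\<lambda>t. F y t - F x t) < \<epsilon>"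
    and psi_L1: "set_integrable lborel {0..T} \<psi>"
    and F_bound: "\<And>x. W1p T p x \<Longrightarrow> AE t in lborel. t \<in> {0..T} \<longrightarrow> \<bar>F x t\<bar> \<le> \<psi> t"
begin

definition "gg x c s = (1 / A x s) * inv \<Phi> (c + calF F x s)"
definition "G x c = (LINT t:{0..T}|lborel. gg x c t)"
definition "Mp = (LINT t:{0..T}|lborel. \<psi> t)"
definition "KK a b = max \<bar>inv \<Phi> a\<bar> \<bar>inv \<Phi> b\<bar>"

lemma invPhi: "continuous_on UNIV (inv \<Phi>)" "\<And>a. inv \<Phi> (\<Phi> a) = a" "\<And>b. \<Phi> (inv \<Phi> b) = b"
  using Phi_homeo unfolding homeomorphism_def by auto

lemma invPhi_mono: "a < b \<Longrightarrow> inv \<Phi> a < inv \<Phi> b"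
proof (rule ccontr)
  assume "a < b" "\<not> inv \<Phi> a < inv \<Phi> b"
  then have "inv \<Phi> b \<le> inv \<Phi> a" by simp
  then have "\<Phi> (inv \<Phi> b) \<le> \<Phi> (inv \<Phi> a)" using Phi_mono strict_mono_mono monoD by metis
  then show False using \<open>a < b\<close> invPhi by simp
qed

lemma invPhi_mono': "a \<le> b \<Longrightarrow> inv \<Phi> a \<le> inv \<Phi> b"
  using invPhi_mono[of a b] by (cases "a = b") auto

lemma invPhi_isCont: "isCont (inv \<Phi>) u"
  using invPhi(1) continuous_on_eq_continuous_at open_UNIV by blast

lemma invPhi_meas: "inv \<Phi> \<in> borel_measurable borel"
  using invPhi(1) by (rule borel_measurable_continuous_onI)

lemma KK_bound: "a \<le> u \<Longrightarrow> u \<le> b \<Longrightarrow> \<bar>inv \<Phi> u\<bar> \<le> KK a b"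
  using invPhi_mono'[of a u] invPhi_mono'[of u b] unfolding KK_def by auto

lemma KK_nn: "KK a b \<ge> 0" unfolding KK_def by auto

lemma h1_int: "set_integrable lborel {0..T} (\<lambda>t. \<bar>1 / h1 t\<bar> powr p)"
  "set_integrable lborel {0..T} (\<lambda>t. \<bar>1 / h1 t\<bar>)"
  "set_integrable lborel {0..T} (\<lambda>t. \<bar>1 / h1 t\<bar> powr 1)"
proof -
  show "set_integrable lborel {0..T} (\<lambda>t. \<bar>1 / h1 t\<bar> powr p)" using h1_inv unfolding Lp_def by auto
  show a: "set_integrable lborel {0..T} (\<lambda>t. \<bar>1 / h1 t\<bar>)"
    using Lp_L1[OF _ h1_inv] p by (intro set_integrable_abs) auto
  show "set_integrable lborel {0..T} (\<lambda>t. \<bar>1 / h1 t\<bar> powr 1)"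
    using a by simp
qed

lemma calF_le: "W1p T p x \<Longrightarrow> t \<in> {0..T} \<Longrightarrow> \<bar>calF F x t\<bar> \<le> (LINT s:{0..T}|lborel. \<bar>F x s\<bar>)"
  unfolding calF_def by (rule set_int_abs_le[OF F_L1])

lemma calF_bound: "W1p T p x \<Longrightarrow> t \<in> {0..T} \<Longrightarrow> \<bar>calF F x t\<bar> \<le> Mp"
proof -
  assume x: "W1p T p x" and t: "t \<in> {0..T}"
  have "(LINT s:{0..T}|lborel. \<bar>F x s\<bar>) \<le> Mp"
    unfolding Mp_def
    by (rule set_integral_mono_AE[OF set_integrable_abs[OF F_L1[OF x]] psi_L1])
       (use F_bound[OF x] in \<open>auto elim!: eventually_mono\<close>)
  then show ?thesis using calF_le[OF x t] by linarith
qed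

lemma calF_diff: "W1p T p x \<Longrightarrow> W1p T p y \<Longrightarrow> t \<in> {0..T} \<Longrightarrow>
   \<bar>calF F y t - calF F x t\<bar> \<le> L1_norm T (\<lambda>t. F y t - F x t)"
proof -
  assume x: "W1p T p x" and y: "W1p T p y" and t: "t \<in> {0..T}"
  have i: "set_integrable lborel {0..T} (\<lambda>s. F y s - F x s)" using F_L1[OF x] F_L1[OF y] by auto
  have "calF F y t - calF F x t = (LINT s:{0..t}|lborel. F y s - F x s)"
    unfolding calF_def using t
    by (intro set_integral_diff(2)[symmetric] set_integrable_subset[OF F_L1[OF y]] set_integrable_subset[OF F_L1[OF x]]) auto
  then show ?thesis using set_int_abs_le[OF i t] unfolding L1_norm_def by simp
qed

lemma calF_cont: "W1p T p x \<Longrightarrow> continuous_on {0..T} (calF F x)"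
  unfolding calF_def by (rule indef_cont[OF F_L1])

lemma gg_meas: "W1p T p x \<Longrightarrow> gg x c \<in> borel_measurable (restrict_space lborel {0..T})"
proof -
  assume x: "W1p T p x"
  have [measurable]: "A x \<in> borel_measurable (restrict_space lborel {0..T})"
    using cont_meas[OF A_cont_fun[OF x]] .
  have [measurable]: "calF F x \<in> borel_measurable (restrict_space lborel {0..T})"
    using cont_meas[OF calF_cont[OF x]] .
  have [measurable]: "(\<lambda>s. inv \<Phi> (c + calF F x s)) \<in> borel_measurable (restrict_space lborel {0..T})"
    by (rule borel_measurable_continuous_on[OF invPhi(1)]) measurable
  show ?thesis unfolding gg_def[abs_def] by measurable
qed

lemma gg_bound:
  assumes x: "W1p T p x" and c: "\<bar>c\<bar> \<le> C"
  shows "AE t in lborel. t \<in> {0..T} \<longrightarrow> \<bar>gg x c t\<bar> \<le> KK (- C - Mp) (C + Mp) * \<bar>1 / h1 t\<bar>"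
  using h1_pos
proof (rule eventually_mono, intro impI)
  fix t assume h: "t \<in> {0..T} \<longrightarrow> 0 < h1 t" and t: "t \<in> {0..T}"
  have h1t: "0 < h1 t" "h1 t \<le> A x t" using h t A_bounds[OF x t] by auto
  have a: "\<bar>1 / A x t\<bar> \<le> \<bar>1 / h1 t\<bar>"
  proof -
    have "0 < A x t" using h1t by linarith
    then have "\<bar>1 / A x t\<bar> = 1 / A x t" "\<bar>1 / h1 t\<bar> = 1 / h1 t" using h1t by auto
    moreover have "1 / A x t \<le> 1 / h1 t" using h1t by (intro divide_left_mono) auto
    ultimately show ?thesis by simp
  qed
  have b: "\<bar>inv \<Phi> (c + calF F x t)\<bar> \<le> KK (- C - Mp) (C + Mp)"
  proof (rule KK_bound)
    have "\<bar>calF F x t\<bar> \<le> Mp" by (rule calF_bound[OF x t])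
    then show "- C - Mp \<le> c + calF F x t" "c + calF F x t \<le> C + Mp" using c by linarith+
  qed
  have "\<bar>gg x c t\<bar> = \<bar>1 / A x t\<bar> * \<bar>inv \<Phi> (c + calF F x t)\<bar>" unfolding gg_def by (simp add: abs_mult)
  also have "\<dots> \<le> \<bar>1 / h1 t\<bar> * KK (- C - Mp) (C + Mp)"
    using a b by (intro mult_mono) auto
  finally show "\<bar>gg x c t\<bar> \<le> KK (- C - Mp) (C + Mp) * \<bar>1 / h1 t\<bar>" by (simp add: mult.commute)
qed

lemma Lp_of_bound:
  assumes m: "f \<in> borel_measurable (restrict_space lborel {0..T})" and K: "K \<ge> 0"
    and b: "AE t in lborel. t \<in> {0..T} \<longrightarrow> \<bar>f t\<bar> \<le> K * \<bar>1 / h1 t\<bar>"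
  shows "Lp T p f" "set_integrable lborel {0..T} f"
proof -
  have sm: "set_borel_measurable lborel {0..T} f" using m by (simp only: sbm_iff)
  have m2: "(\<lambda>t. \<bar>f t\<bar> powr p) \<in> borel_measurable (restrict_space lborel {0..T})" using m by measurable
  then have sm2: "set_borel_measurable lborel {0..T} (\<lambda>t. \<bar>f t\<bar> powr p)" by (simp only: sbm_iff)
  have i1: "set_integrable lborel {0..T} (\<lambda>t. K powr p * \<bar>1 / h1 t\<bar> powr p)"
    using h1_int(1) by (rule set_integrable_mult_right)
  have b2: "AE t in lborel. t \<in> {0..T} \<longrightarrow> norm (\<bar>f t\<bar> powr p) \<le> norm (K powr p * \<bar>1 / h1 t\<bar> powr p)"
    using b
  proof (rule eventually_mono, intro impI)
    fix t assume h: "t \<in> {0..T} \<longrightarrow> \<bar>f t\<bar> \<le> K * \<bar>1 / h1 t\<bar>" and t: "t \<in> {0..T}"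
    have "\<bar>f t\<bar> powr p \<le> (K * \<bar>1 / h1 t\<bar>) powr p" using h t p by (intro powr_mono2) auto
    also have "\<dots> = K powr p * \<bar>1 / h1 t\<bar> powr p" using K by (subst powr_mult) auto
    finally show "norm (\<bar>f t\<bar> powr p) \<le> norm (K powr p * \<bar>1 / h1 t\<bar> powr p)" by simp
  qed
  have "set_integrable lborel {0..T} (\<lambda>t. \<bar>f t\<bar> powr p)"
    by (rule set_integrable_bound[OF i1 sm2 b2])
  then show "Lp T p f" using sm unfolding Lp_def by blast
  have i3: "set_integrable lborel {0..T} (\<lambda>t. K * \<bar>1 / h1 t\<bar>)"
    using h1_int(2) by (rule set_integrable_mult_right)
  have b3: "AE t in lborel. t \<in> {0..T} \<longrightarrow> norm (f t) \<le> norm (K * \<bar>1 / h1 t\<bar>)"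
    using b
  proof (rule eventually_mono, intro impI)
    fix t assume h: "t \<in> {0..T} \<longrightarrow> \<bar>f t\<bar> \<le> K * \<bar>1 / h1 t\<bar>" and t: "t \<in> {0..T}"
    have "0 \<le> K * \<bar>1 / h1 t\<bar>" using K by simp
    then show "norm (f t) \<le> norm (K * \<bar>1 / h1 t\<bar>)" using h t K by simp
  qed
  show "set_integrable lborel {0..T} f"
    by (rule set_integrable_bound[OF i3 sm b3])
qed

lemma gg_Lp:
  assumes x: "W1p T p x"
  shows "Lp T p (gg x c)" "set_integrable lborel {0..T} (gg x c)"
proof -
  have b: "AE t in lborel. t \<in> {0..T} \<longrightarrow> \<bar>gg x c t\<bar> \<le> KK (- \<bar>c\<bar> - Mp) (\<bar>c\<bar> + Mp) * \<bar>1 / h1 t\<bar>"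
    by (rule gg_bound[OF x]) simp
  show "Lp T p (gg x c)" by (rule Lp_of_bound(1)[OF gg_meas[OF x] KK_nn b])
  show "set_integrable lborel {0..T} (gg x c)" by (rule Lp_of_bound(2)[OF gg_meas[OF x] KK_nn b])
qed

end



lemma conv_by_bound:
  fixes f e :: "nat \<Rightarrow> real"
  assumes "\<And>n. \<bar>f n - l\<bar> \<le> e n" "e \<longlonglongrightarrow> 0"
  shows "f \<longlonglongrightarrow> l"
proof -
  have ev: "eventually (\<lambda>n. norm (f n - l) \<le> e n) sequentially"
    by (intro always_eventually allI) (simp add: assms(1))
  have "(\<lambda>n. f n - l) \<longlonglongrightarrow> 0" by (rule Lim_null_comparison[OF ev assms(2)])
  from tendsto_add[OF this tendsto_const[of l]] show ?thesis by simp
qed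

context setting begin

abbreviation "xx x \<equiv> xi T \<Phi> A F \<nu>1 \<nu>2 x"
abbreviation "PP x \<equiv> calP T \<Phi> A F \<nu>1 \<nu>2 x"

lemma calP_eq: "PP x t = \<nu>1 + (LINT s:{0..t}|lborel. gg x (xx x) s)"
  unfolding calP_def gg_def by simp

lemma calP_W1p: "W1p T p x \<Longrightarrow> is_wderiv T p (PP x) (gg x (xx x))"
proof -
  assume x: "W1p T p x"
  have "PP x 0 = \<nu>1" unfolding calP_eq using LINT_point[of 0] by simp
  then show ?thesis unfolding is_wderiv_def using gg_Lp(1)[OF x] calP_eq by simp
qed

lemma G_mono: assumes x: "W1p T p x" and c: "c1 < c2" shows "G x c1 < G x c2"
proof -
  have "G x c2 - G x c1 = (LINT t:{0..T}|lborel. gg x c2 t - gg x c1 t)"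
    unfolding G_def by (rule set_integral_diff(2)[symmetric, OF gg_Lp(2)[OF x] gg_Lp(2)[OF x]])
  also have "\<dots> > 0"
  proof (rule pos_integral[OF T])
    show "set_integrable lborel {0..T} (\<lambda>t. gg x c2 t - gg x c1 t)"
      by (rule set_integral_diff(1)[OF gg_Lp(2)[OF x] gg_Lp(2)[OF x]])
    show "AE t in lborel. t \<in> {0..T} \<longrightarrow> 0 < gg x c2 t - gg x c1 t"
      using h1_pos
    proof (rule eventually_mono, intro impI)
      fix t assume h: "t \<in> {0..T} \<longrightarrow> 0 < h1 t" and t: "t \<in> {0..T}"
      have "0 < A x t" using h t A_bounds[OF x t] by force
      moreover have "inv \<Phi> (c1 + calF F x t) < inv \<Phi> (c2 + calF F x t)"
        using c by (intro invPhi_mono) simp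
      ultimately show "0 < gg x c2 t - gg x c1 t"
        unfolding gg_def by (simp add: divide_strict_right_mono)
    qed
  qed
  finally show ?thesis by simp
qed

lemma gg_conv:
  assumes x: "W1p T p x" and y: "\<And>n. W1p T p (y n)"
   and Aconv: "\<And>t. t \<in> {0..T} \<Longrightarrow> (\<lambda>n. A (y n) t) \<longlonglongrightarrow> A x t"
   and Fconv: "\<And>t. t \<in> {0..T} \<Longrightarrow> (\<lambda>n. calF F (y n) t) \<longlonglongrightarrow> calF F x t"
   and c: "c \<longlonglongrightarrow> c0" and q: "q > 0" and iq: "set_integrable lborel {0..T} (\<lambda>t. \<bar>1 / h1 t\<bar> powr q)"
  shows "(\<lambda>n. LINT t:{0..T}|lborel. \<bar>gg (y n) (c n) t - gg x c0 t\<bar> powr q) \<longlonglongrightarrow> 0"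
proof -
  have "Bseq c" using convergent_imp_Bseq[OF convergentI[OF c]] .
  then obtain C0 where C0: "\<And>n. norm (c n) \<le> C0"
    unfolding Bseq_def by blast
  define C where "C = max C0 \<bar>c0\<bar>"
  have cn: "\<bar>c n\<bar> \<le> C" for n using C0[of n] unfolding C_def by auto
  have cc0: "\<bar>c0\<bar> \<le> C" unfolding C_def by auto
  define K where "K = KK (- C - Mp) (C + Mp)"
  have K: "K \<ge> 0" unfolding K_def by (rule KK_nn)
  show ?thesis
  proof (rule dct_Lq[where B = "\<lambda>t. K * \<bar>1 / h1 t\<bar>", OF q gg_meas[OF y] gg_meas[OF x]])
    show "AE t in lborel. t \<in> {0..T} \<longrightarrow> \<bar>gg (y n) (c n) t\<bar> \<le> K * \<bar>1 / h1 t\<bar>" for n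
      unfolding K_def by (rule gg_bound[OF y cn])
    show "AE t in lborel. t \<in> {0..T} \<longrightarrow> \<bar>gg x c0 t\<bar> \<le> K * \<bar>1 / h1 t\<bar>"
      unfolding K_def by (rule gg_bound[OF x cc0])
    have e: "(\<lambda>t. (K * \<bar>1 / h1 t\<bar>) powr q) = (\<lambda>t. K powr q * \<bar>1 / h1 t\<bar> powr q)"
      using K by (intro ext powr_mult)
    show "set_integrable lborel {0..T} (\<lambda>t. (K * \<bar>1 / h1 t\<bar>) powr q)"
      unfolding e by (rule set_integrable_mult_right[OF iq])
    show "AE t in lborel. t \<in> {0..T} \<longrightarrow> (\<lambda>n. gg (y n) (c n) t) \<longlonglongrightarrow> gg x c0 t"
      using h1_pos
    proof (rule eventually_mono, intro impI)
      fix t assume h: "t \<in> {0..T} \<longrightarrow> 0 < h1 t" and t: "t \<in> {0..T}"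
      have "0 < A x t" using h t A_bounds[OF x t] by force
      then have a: "(\<lambda>n. 1 / A (y n) t) \<longlonglongrightarrow> 1 / A x t"
        by (intro tendsto_divide[OF tendsto_const Aconv[OF t]]) auto
      have b: "(\<lambda>n. inv \<Phi> (c n + calF F (y n) t)) \<longlonglongrightarrow> inv \<Phi> (c0 + calF F x t)"
        by (rule isCont_tendsto_compose[OF invPhi_isCont tendsto_add[OF c Fconv[OF t]]])
      show "(\<lambda>n. gg (y n) (c n) t) \<longlonglongrightarrow> gg x c0 t"
        unfolding gg_def by (rule tendsto_mult[OF a b])
    qed
  qed
qed

lemma G_diff_le: "W1p T p x \<Longrightarrow> W1p T p y \<Longrightarrow>
  \<bar>G y c - G x c'\<bar> \<le> (LINT t:{0..T}|lborel. \<bar>gg y c t - gg x c' t\<bar> powr 1)"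
proof -
  assume x: "W1p T p x" and y: "W1p T p y"
  have i: "set_integrable lborel {0..T} (\<lambda>t. gg y c t - gg x c' t)"
    by (rule set_integral_diff(1)[OF gg_Lp(2)[OF y] gg_Lp(2)[OF x]])
  have "G y c - G x c' = (LINT t:{0..T}|lborel. gg y c t - gg x c' t)"
    unfolding G_def by (rule set_integral_diff(2)[symmetric, OF gg_Lp(2)[OF y] gg_Lp(2)[OF x]])
  then show ?thesis using set_integral_norm_bound[OF i] by simp
qed

lemma G_cont: assumes x: "W1p T p x" shows "continuous_on (S::real set) (G x)"
proof (rule continuous_on_sequentiallyI)
  fix u :: "nat \<Rightarrow> real" and a :: real assume u: "u \<longlonglongrightarrow> a"
  have "(\<lambda>n. LINT t:{0..T}|lborel. \<bar>gg x (u n) t - gg x a t\<bar> powr 1) \<longlonglongrightarrow> 0"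
    by (rule gg_conv[OF x x tendsto_const tendsto_const u _ h1_int(3)]) simp
  then show "(\<lambda>n. G x (u n)) \<longlonglongrightarrow> G x a"
    by (rule conv_by_bound[OF G_diff_le[OF x x]])
qed

lemma G_exists: assumes x: "W1p T p x" shows "\<exists>\<xi>. G x \<xi> = \<nu>2 - \<nu>1"
proof -
  define D where "D = \<nu>2 - \<nu>1"
  define J where "J = (LINT t:{0..T}|lborel. 1 / h2 t)"
  have iJ: "set_integrable lborel {0..T} (\<lambda>t. 1 / h2 t)" using Lp_L1[OF _ h2_inv] p by simp
  have J: "J > 0" unfolding J_def
    by (rule pos_integral[OF T iJ]) (use h2_pos in \<open>auto elim!: eventually_mono\<close>)
  have key: "0 < A x t \<and> 1 / h2 t \<le> 1 / A x t" if "t \<in> {0..T}" "0 < h1 t" for t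
  proof -
    have "h1 t \<le> A x t" "A x t \<le> h2 t" using A_bounds[OF x that(1)] by auto
    then have "0 < A x t" using that by linarith
    moreover have "1 / h2 t \<le> 1 / A x t" using \<open>A x t \<le> h2 t\<close> \<open>0 < A x t\<close> by (intro divide_left_mono) auto
    ultimately show ?thesis by blast
  qed
  define R where "R = max 0 (D / J)"
  define chi where "chi = \<Phi> R + Mp"
  have R: "R \<ge> 0" "D \<le> R * J" using J unfolding R_def by (auto simp: field_simps max_def)
  have "R * J = (LINT t:{0..T}|lborel. R * (1 / h2 t))" unfolding J_def by (rule set_integral_mult_right[symmetric])
  also have "\<dots> \<le> G x chi" unfolding G_def
  proof (rule set_integral_mono_AE)
    show "set_integrable lborel {0..T} (\<lambda>t. R * (1 / h2 t))" by (rule set_integrable_mult_right[OF iJ])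
    show "set_integrable lborel {0..T} (gg x chi)" by (rule gg_Lp(2)[OF x])
    show "AE t\<in>{0..T} in lborel. R * (1 / h2 t) \<le> gg x chi t"
      using h1_pos
    proof (rule eventually_mono, intro impI)
      fix t assume h: "t \<in> {0..T} \<longrightarrow> 0 < h1 t" and t: "t \<in> {0..T}"
      have k: "0 < A x t" "1 / h2 t \<le> 1 / A x t" using key[OF t] h t by auto
      have "\<Phi> R \<le> chi + calF F x t" using calF_bound[OF x t] unfolding chi_def by linarith
      then have "R \<le> inv \<Phi> (chi + calF F x t)" using invPhi_mono'[of "\<Phi> R"] invPhi(2) by metis
      have "R * (1 / h2 t) \<le> R * (1 / A x t)" using k R by (intro mult_left_mono) auto
      also have "\<dots> \<le> inv \<Phi> (chi + calF F x t) * (1 / A x t)"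
        using \<open>R \<le> inv \<Phi> (chi + calF F x t)\<close> k by (intro mult_right_mono) auto
      finally show "R * (1 / h2 t) \<le> gg x chi t" unfolding gg_def by (simp add: mult.commute)
    qed
  qed
  finally have hi: "D \<le> G x chi" using R by linarith
  define R' where "R' = max 0 (- D / J)"
  define clo where "clo = \<Phi> (- R') - Mp"
  have R': "R' \<ge> 0" "- R' * J \<le> D" using J unfolding R'_def by (auto simp: field_simps max_def)
  have "G x clo \<le> (LINT t:{0..T}|lborel. (- R') * (1 / h2 t))" unfolding G_def
  proof (rule set_integral_mono_AE)
    show "set_integrable lborel {0..T} (\<lambda>t. (- R') * (1 / h2 t))" by (rule set_integrable_mult_right[OF iJ])
    show "set_integrable lborel {0..T} (gg x clo)" by (rule gg_Lp(2)[OF x])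
    show "AE t\<in>{0..T} in lborel. gg x clo t \<le> (- R') * (1 / h2 t)"
      using h1_pos
    proof (rule eventually_mono, intro impI)
      fix t assume h: "t \<in> {0..T} \<longrightarrow> 0 < h1 t" and t: "t \<in> {0..T}"
      have k: "0 < A x t" "1 / h2 t \<le> 1 / A x t" using key[OF t] h t by auto
      have "clo + calF F x t \<le> \<Phi> (- R')" using calF_bound[OF x t] unfolding clo_def by linarith
      then have v: "inv \<Phi> (clo + calF F x t) \<le> - R'" using invPhi_mono'[of _ "\<Phi> (- R')"] invPhi(2) by metis
      have "inv \<Phi> (clo + calF F x t) * (1 / A x t) \<le> (- R') * (1 / A x t)"
        using v k by (intro mult_right_mono) auto
      also have "\<dots> \<le> (- R') * (1 / h2 t)" using k R' by (intro mult_left_mono_neg) auto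
      finally show "gg x clo t \<le> (- R') * (1 / h2 t)" unfolding gg_def by (simp add: mult.commute)
    qed
  qed
  also have "\<dots> = - R' * J" unfolding J_def by (rule set_integral_mult_right)
  finally have lo: "G x clo \<le> D" using R' by linarith
  have le: "clo \<le> chi"
  proof (rule ccontr)
    assume "\<not> clo \<le> chi"
    then have "G x chi < G x clo" using G_mono[OF x] by simp
    then show False using hi lo by linarith
  qed
  from IVT'[OF lo hi le G_cont[OF x]] show ?thesis unfolding D_def by blast
qed

lemma xi_prop: assumes x: "W1p T p x" shows "G x (xx x) = \<nu>2 - \<nu>1"
proof -
  have e: "xx x = (THE \<xi>. G x \<xi> = \<nu>2 - \<nu>1)" unfolding xi_def G_def gg_def by simp
  have "\<exists>!\<xi>. G x \<xi> = \<nu>2 - \<nu>1"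
  proof (rule ex_ex1I)
    show "\<exists>\<xi>. G x \<xi> = \<nu>2 - \<nu>1" by (rule G_exists[OF x])
    fix a b assume "G x a = \<nu>2 - \<nu>1" "G x b = \<nu>2 - \<nu>1"
    then show "a = b" using G_mono[OF x, of a b] G_mono[OF x, of b a] by (cases a b rule: linorder_cases) auto
  qed
  from theI'[OF this] show ?thesis unfolding e .
qed

end


lemma const_int: "set_integrable lborel {0..T::real} (\<lambda>t. c::real)"
proof -
  have "set_integrable lborel {0..T} (\<lambda>t. 1::real)"
    unfolding set_integrable_def by (simp add: integrable_indicator_iff[symmetric] emeasure_lborel_Icc_eq)
  then have "set_integrable lborel {0..T} (\<lambda>t. c * 1)" by (rule set_integrable_mult_right)
  then show ?thesis by simp
qed

lemma wderiv_norm: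
  assumes w: "is_wderiv T p z g" and p: "p \<ge> 1" and T: "T \<ge> 0"
  shows "Lp_norm T p (wderiv T p z) = Lp_norm T p g"
proof -
  have "\<exists>g. is_wderiv T p z g" using w by blast
  then have w2: "is_wderiv T p z (wderiv T p z)" unfolding wderiv_def by (rule someI_ex)
  define h where "h = wderiv T p z"
  have ig: "set_integrable lborel {0..T} g" using w p Lp_L1 unfolding is_wderiv_def by blast
  have ih: "set_integrable lborel {0..T} h" using w2 p Lp_L1 unfolding is_wderiv_def h_def by blast
  have "AE t in lborel. t \<in> {0..T} \<longrightarrow> h t - g t = 0"
  proof (rule ae_zero_of_int_zero[OF T])
    show "set_integrable lborel {0..T} (\<lambda>t. h t - g t)" using ih ig by (rule set_integral_diff(1))
    show "\<forall>t\<in>{0..T}. (LINT s:{0..t}|lborel. h s - g s) = 0"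
    proof
      fix t assume t: "t \<in> {0..T}"
      have a: "set_integrable lborel {0..t} h" "set_integrable lborel {0..t} g"
        using t by (auto intro: set_integrable_subset[OF ih] set_integrable_subset[OF ig])
      have "(LINT s:{0..t}|lborel. h s - g s) = (LINT s:{0..t}|lborel. h s) - (LINT s:{0..t}|lborel. g s)"
        using a by (rule set_integral_diff(2))
      also have "\<dots> = 0"
      proof -
        have e1: "z t = z 0 + (LINT s:{0..t}|lborel. g s)" using w t unfolding is_wderiv_def by blast
        have e2: "z t = z 0 + (LINT s:{0..t}|lborel. h s)" using w2 t unfolding is_wderiv_def h_def by blast
        show ?thesis using e1 e2 by linarith
      qed
      finally show "(LINT s:{0..t}|lborel. h s - g s) = 0" .
    qed
  qed
  then have ae: "AE t in lborel. indicator {0..T} t *\<^sub>R (\<bar>h t\<bar> powr p) = indicator {0..T} t *\<^sub>R (\<bar>g t\<bar> powr p)"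
    by (rule eventually_mono) (auto simp: indicator_def)
  then have "(LINT t:{0..T}|lborel. \<bar>h t\<bar> powr p) = (LINT t:{0..T}|lborel. \<bar>g t\<bar> powr p)"
  proof -
    have m1: "(\<lambda>t. indicator {0..T} t *\<^sub>R (\<bar>h t\<bar> powr p)) \<in> borel_measurable lborel"
      using w2 unfolding is_wderiv_def Lp_def set_integrable_def h_def by (blast intro: borel_measurable_integrable)
    have m2: "(\<lambda>t. indicator {0..T} t *\<^sub>R (\<bar>g t\<bar> powr p)) \<in> borel_measurable lborel"
      using w unfolding is_wderiv_def Lp_def set_integrable_def by (blast intro: borel_measurable_integrable)
    show ?thesis unfolding set_lebesgue_integral_def by (rule integral_cong_AE[OF m1 m2 ae])
  qed
  then show ?thesis unfolding Lp_norm_def h_def by (rule arg_cong[where f="\<lambda>u. u powr (1 / p)"])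
qed

lemma set_int_nonneg: assumes "\<And>t. 0 \<le> f t" shows "0 \<le> (LINT t:S|lborel. (f t::real))"
  unfolding set_lebesgue_integral_def by (rule integral_nonneg_AE) (auto simp: indicator_def assms)

context setting begin

lemma xi_conv:
  assumes x: "W1p T p x" and y: "\<And>n. W1p T p (y n)"
   and Aconv: "\<And>t. t \<in> {0..T} \<Longrightarrow> (\<lambda>n. A (y n) t) \<longlonglongrightarrow> A x t"
   and Fconv: "\<And>t. t \<in> {0..T} \<Longrightarrow> (\<lambda>n. calF F (y n) t) \<longlonglongrightarrow> calF F x t"
  shows "(\<lambda>n. xx (y n)) \<longlonglongrightarrow> xx x"
proof -
  have conv: "(\<lambda>n. G (y n) a) \<longlonglongrightarrow> G x a" for a
    by (rule conv_by_bound[OF G_diff_le[OF x y] gg_conv[OF x y Aconv Fconv tendsto_const zero_less_one[where 'a=real] h1_int(3)]])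
  show ?thesis
  proof (rule order_tendstoI)
    fix a assume a: "a < xx x"
    have "G x a < \<nu>2 - \<nu>1" using G_mono[OF x a] xi_prop[OF x] by simp
    then have "eventually (\<lambda>n. G (y n) a < \<nu>2 - \<nu>1) sequentially" by (rule order_tendstoD(2)[OF conv])
    then show "eventually (\<lambda>n. a < xx (y n)) sequentially"
    proof (rule eventually_mono)
      fix n assume h: "G (y n) a < \<nu>2 - \<nu>1"
      show "a < xx (y n)"
      proof (rule ccontr)
        assume "\<not> a < xx (y n)"
        then have "G (y n) (xx (y n)) \<le> G (y n) a" using G_mono[OF y, of "xx (y n)" a n]
          by (cases "xx (y n) = a") auto
        then show False using h xi_prop[OF y] by simp
      qed
    qed
  next
    fix a assume a: "xx x < a"
    have "\<nu>2 - \<nu>1 < G x a" using G_mono[OF x a] xi_prop[OF x] by simp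
    then have "eventually (\<lambda>n. \<nu>2 - \<nu>1 < G (y n) a) sequentially" by (rule order_tendstoD(1)[OF conv])
    then show "eventually (\<lambda>n. xx (y n) < a) sequentially"
    proof (rule eventually_mono)
      fix n assume h: "\<nu>2 - \<nu>1 < G (y n) a"
      show "xx (y n) < a"
      proof (rule ccontr)
        assume "\<not> xx (y n) < a"
        then have "G (y n) a \<le> G (y n) (xx (y n))" using G_mono[OF y, of a "xx (y n)" n]
          by (cases "xx (y n) = a") auto
        then show False using h xi_prop[OF y] by simp
      qed
    qed
  qed
qed

end


context setting begin

lemma PP_cont: "W1p T p z \<Longrightarrow> continuous_on {0..T} (PP z)"
proof -
  assume z: "W1p T p z"
  have "continuous_on {0..T} (\<lambda>t. \<nu>1 + (LINT s:{0..t}|lborel. gg z (xx z) s))"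
    by (intro continuous_on_add continuous_on_const indef_cont[OF gg_Lp(2)[OF z]])
  then show ?thesis unfolding calP_eq[abs_def] .
qed

lemma PP_0: "PP z 0 = \<nu>1"
  unfolding calP_eq using LINT_point[of 0] by simp

lemma P_conv:
  assumes x: "W1p T p x" and y: "\<And>n. W1p T p (y n)"
    and close: "\<And>\<delta>. \<delta> > 0 \<Longrightarrow> eventually (\<lambda>n. W1p_norm T p (\<lambda>t. y n t - x t) < \<delta>) sequentially"
  shows "(\<lambda>n. W1p_norm T p (\<lambda>t. PP (y n) t - PP x t)) \<longlonglongrightarrow> 0"
proof -
  have p0: "(0::real) < p" and p1: "1 \<le> p" and T0: "0 \<le> T" using p T by auto
  have Aconv: "(\<lambda>n. A (y n) t) \<longlonglongrightarrow> A x t" if t: "t \<in> {0..T}" for t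
  proof (rule tendstoI)
    fix e :: real assume e: "e > 0"
    obtain \<delta> where \<delta>: "\<delta> > 0" "\<forall>z. W1p T p z \<and> W1p_norm T p (\<lambda>t. z t - x t) < \<delta> \<longrightarrow> (\<forall>t\<in>{0..T}. \<bar>A z t - A x t\<bar> < e)"
      using A_cont[OF x e] by blast
    show "eventually (\<lambda>n. dist (A (y n) t) (A x t) < e) sequentially"
      using close[OF \<delta>(1)]
    proof (rule eventually_mono)
      fix n assume "W1p_norm T p (\<lambda>t. y n t - x t) < \<delta>"
      then have "\<bar>A (y n) t - A x t\<bar> < e" using \<delta>(2) y[of n] t by blast
      then show "dist (A (y n) t) (A x t) < e" by (simp add: dist_real_def)
    qed
  qed
  have Fconv: "(\<lambda>n. calF F (y n) t) \<longlonglongrightarrow> calF F x t" if t: "t \<in> {0..T}" for t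
  proof (rule tendstoI)
    fix e :: real assume e: "e > 0"
    obtain \<delta> where \<delta>: "\<delta> > 0" "\<forall>z. W1p T p z \<and> W1p_norm T p (\<lambda>t. z t - x t) < \<delta> \<longrightarrow> L1_norm T (\<lambda>t. F z t - F x t) < e"
      using F_cont[OF x e] by blast
    show "eventually (\<lambda>n. dist (calF F (y n) t) (calF F x t) < e) sequentially"
      using close[OF \<delta>(1)]
    proof (rule eventually_mono)
      fix n assume "W1p_norm T p (\<lambda>t. y n t - x t) < \<delta>"
      then have "L1_norm T (\<lambda>t. F (y n) t - F x t) < e" using \<delta>(2) y[of n] by blast
      then have "\<bar>calF F (y n) t - calF F x t\<bar> < e" using calF_diff[OF x y t, of n] by linarith
      then show "dist (calF F (y n) t) (calF F x t) < e" by (simp add: dist_real_def)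
    qed
  qed
  have xic: "(\<lambda>n. xx (y n)) \<longlonglongrightarrow> xx x" by (rule xi_conv[OF x y Aconv Fconv])
  define d where "d = (\<lambda>n t. gg (y n) (xx (y n)) t - gg x (xx x) t)"
  define e where "e = (\<lambda>n. LINT t:{0..T}|lborel. \<bar>d n t\<bar> powr 1)"
  define ep where "ep = (\<lambda>n. LINT t:{0..T}|lborel. \<bar>d n t\<bar> powr p)"
  have e0: "e \<longlonglongrightarrow> 0" unfolding e_def d_def
    by (rule gg_conv[OF x y Aconv Fconv xic zero_less_one[where 'a=real] h1_int(3)])
  have ep0: "ep \<longlonglongrightarrow> 0" unfolding ep_def d_def
    by (rule gg_conv[OF x y Aconv Fconv xic p0 h1_int(1)])
  have ie: "set_integrable lborel {0..T} (d n)" for n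
    unfolding d_def by (rule set_integral_diff(1)[OF gg_Lp(2)[OF y] gg_Lp(2)[OF x]])
  have Lpd: "Lp T p (d n)" for n
  proof -
    define K1 where "K1 = KK (- \<bar>xx (y n)\<bar> - Mp) (\<bar>xx (y n)\<bar> + Mp)"
    define K2 where "K2 = KK (- \<bar>xx x\<bar> - Mp) (\<bar>xx x\<bar> + Mp)"
    have m: "d n \<in> borel_measurable (restrict_space lborel {0..T})"
      unfolding d_def using borel_measurable_diff[OF gg_meas[OF y] gg_meas[OF x]] by simp
    have K: "0 \<le> K1 + K2" unfolding K1_def K2_def using KK_nn by (simp add: add_nonneg_nonneg)
    have b1: "AE t in lborel. t \<in> {0..T} \<longrightarrow> \<bar>gg (y n) (xx (y n)) t\<bar> \<le> K1 * \<bar>1 / h1 t\<bar>"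
      unfolding K1_def by (rule gg_bound[OF y order_refl])
    have b2: "AE t in lborel. t \<in> {0..T} \<longrightarrow> \<bar>gg x (xx x) t\<bar> \<le> K2 * \<bar>1 / h1 t\<bar>"
      unfolding K2_def by (rule gg_bound[OF x order_refl])
    have b: "AE t in lborel. t \<in> {0..T} \<longrightarrow> \<bar>d n t\<bar> \<le> (K1 + K2) * \<bar>1 / h1 t\<bar>"
      using b1 b2
    proof eventually_elim
      case (elim t)
      show ?case
      proof
        assume t: "t \<in> {0..T}"
        have "\<bar>d n t\<bar> \<le> \<bar>gg (y n) (xx (y n)) t\<bar> + \<bar>gg x (xx x) t\<bar>" unfolding d_def by simp
        also have "\<dots> \<le> K1 * \<bar>1 / h1 t\<bar> + K2 * \<bar>1 / h1 t\<bar>" using elim t by (intro add_mono) auto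
        finally show "\<bar>d n t\<bar> \<le> (K1 + K2) * \<bar>1 / h1 t\<bar>" by (simp only: distrib_right)
      qed
    qed
    show ?thesis by (rule Lp_of_bound(1)[OF m K b])
  qed
  have diffeq: "PP (y n) t - PP x t = (LINT s:{0..t}|lborel. d n s)" if t: "t \<in> {0..T}" for n t
  proof -
    have a: "set_integrable lborel {0..t} (gg (y n) (xx (y n)))" "set_integrable lborel {0..t} (gg x (xx x))"
      using t by (auto intro: set_integrable_subset[OF gg_Lp(2)[OF y]] set_integrable_subset[OF gg_Lp(2)[OF x]])
    have "(LINT s:{0..t}|lborel. d n s) = (LINT s:{0..t}|lborel. gg (y n) (xx (y n)) s) - (LINT s:{0..t}|lborel. gg x (xx x) s)"
      unfolding d_def using set_integral_diff(2)[OF a] by simp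
    then show ?thesis unfolding calP_eq by simp
  qed
  have wd: "is_wderiv T p (\<lambda>t. PP (y n) t - PP x t) (d n)" for n
    unfolding is_wderiv_def using Lpd[of n] diffeq[of _ n] PP_0 LINT_point by auto
  have bnd: "\<bar>PP (y n) t - PP x t\<bar> \<le> e n" if t: "t \<in> {0..T}" for n t
    using set_int_abs_le[OF ie t] diffeq[OF t] unfolding e_def by simp
  define U where "U = (\<lambda>n. LINT t:{0..T}|lborel. \<bar>PP (y n) t - PP x t\<bar> powr p)"
  have U_le: "U n \<le> T * e n powr p" for n
  proof -
    have m: "(\<lambda>t. PP (y n) t - PP x t) \<in> borel_measurable (restrict_space lborel {0..T})"
      by (rule cont_meas) (intro continuous_on_diff PP_cont y x)
    then have m2: "set_borel_measurable lborel {0..T} (\<lambda>t. \<bar>PP (y n) t - PP x t\<bar> powr p)"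
      unfolding sbm_iff by measurable
    have bb: "\<bar>PP (y n) t - PP x t\<bar> powr p \<le> e n powr p" if t: "t \<in> {0..T}" for t
      using bnd[OF t] p0 by (intro powr_mono2) auto
    have i: "set_integrable lborel {0..T} (\<lambda>t. \<bar>PP (y n) t - PP x t\<bar> powr p)"
      by (rule set_integrable_bound[OF const_int[of T "e n powr p"] m2]) (use bb in \<open>auto intro!: AE_I2\<close>)
    have "U n \<le> (LINT t:{0..T}|lborel. e n powr p)"
      unfolding U_def by (rule set_integral_mono[OF i const_int bb])
    also have "\<dots> = T * e n powr p"
      using T0 by (simp add: set_integral_const)
    finally show ?thesis .
  qed
  have U0: "U \<longlonglongrightarrow> 0"
  proof (rule tendsto_sandwich[where f="\<lambda>n. 0" and h="\<lambda>n. T * e n powr p"])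
    show "eventually (\<lambda>n. 0 \<le> U n) sequentially" unfolding U_def by (intro always_eventually allI set_int_nonneg) simp
    show "eventually (\<lambda>n. U n \<le> T * e n powr p) sequentially" using U_le by (intro always_eventually allI)
    have "(\<lambda>n. e n powr p) \<longlonglongrightarrow> 0"
      by (rule tendsto_zero_powrI[OF e0 tendsto_const]) (auto simp: e_def intro!: always_eventually set_int_nonneg p0)
    from tendsto_mult[OF tendsto_const[of T] this] show "(\<lambda>n. T * e n powr p) \<longlonglongrightarrow> 0" by simp
  qed simp
  have W: "W1p_norm T p (\<lambda>t. PP (y n) t - PP x t) = U n powr (1 / p) + ep n powr (1 / p)" for n
    unfolding W1p_norm_def wderiv_norm[OF wd p1 T0] unfolding Lp_norm_def U_def ep_def ..
  have l1: "(\<lambda>n. U n powr (1 / p)) \<longlonglongrightarrow> 0"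
    by (rule tendsto_zero_powrI[OF U0 tendsto_const]) (auto simp: U_def intro!: always_eventually set_int_nonneg p0)
  have l2: "(\<lambda>n. ep n powr (1 / p)) \<longlonglongrightarrow> 0"
    by (rule tendsto_zero_powrI[OF ep0 tendsto_const]) (auto simp: ep_def intro!: always_eventually set_int_nonneg p0)
  show ?thesis unfolding W using tendsto_add[OF l1 l2] by simp
qed

end
theorem lemma2p9:
  fixes T p \<nu>1 \<nu>2 :: real
    and \<Phi> :: "real \<Rightarrow> real"
    and A F :: "(real \<Rightarrow> real) \<Rightarrow> (real \<Rightarrow> real)"
    and h1 h2 \<psi> :: "real \<Rightarrow> real"
  assumes T: "T > 0" and p: "p > 1"
    and Phi_mono: "strict_mono \<Phi>"
    and Phi_homeo: "homeomorphism UNIV UNIV \<Phi> (inv \<Phi>)"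
    and A_cont_fun: "\<And>x. W1p T p x \<Longrightarrow> continuous_on {0..T} (A x)"
    and A_cont: "\<And>x \<epsilon>. W1p T p x \<Longrightarrow> \<epsilon> > 0 \<Longrightarrow> \<exists>\<delta>>0. \<forall>y. W1p T p y \<and>
                   W1p_norm T p (\<lambda>t. y t - x t) < \<delta> \<longrightarrow> (\<forall>t\<in>{0..T}. \<bar>A y t - A x t\<bar> < \<epsilon>)"
    and h1_cont: "continuous_on {0..T} h1" and h2_cont: "continuous_on {0..T} h2"
    and h1_nn: "\<forall>t\<in>{0..T}. h1 t \<ge> 0" and h2_nn: "\<forall>t\<in>{0..T}. h2 t \<ge> 0"
    and h1_pos: "AE t in lborel. t \<in> {0..T} \<longrightarrow> h1 t > 0"
    and h2_pos: "AE t in lborel. t \<in> {0..T} \<longrightarrow> h2 t > 0"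
    and h1_inv: "Lp T p (\<lambda>t. 1 / h1 t)" and h2_inv: "Lp T p (\<lambda>t. 1 / h2 t)"
    and A_bounds: "\<And>x t. W1p T p x \<Longrightarrow> t \<in> {0..T} \<Longrightarrow> h1 t \<le> A x t \<and> A x t \<le> h2 t"
    and F_L1: "\<And>x. W1p T p x \<Longrightarrow> set_integrable lborel {0..T} (F x)"
    and F_cont: "\<And>x \<epsilon>. W1p T p x \<Longrightarrow> \<epsilon> > 0 \<Longrightarrow> \<exists>\<delta>>0. \<forall>y. W1p T p y \<and>
                   W1p_norm T p (\<lambda>t. y t - x t) < \<delta> \<longrightarrow> L1_norm T (\<lambda>t. F y t - F x t) < \<epsilon>"
    and psi_nn: "\<forall>t. \<psi> t \<ge> 0" and psi_L1: "set_integrable lborel {0..T} \<psi>"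
    and F_bound: "\<And>x. W1p T p x \<Longrightarrow> AE t in lborel. t \<in> {0..T} \<longrightarrow> \<bar>F x t\<bar> \<le> \<psi> t"
  shows "(\<forall>x. W1p T p x \<longrightarrow> W1p T p (calP T \<Phi> A F \<nu>1 \<nu>2 x)) \<and>
         (\<forall>x \<epsilon>. W1p T p x \<and> \<epsilon> > 0 \<longrightarrow> (\<exists>\<delta>>0. \<forall>y. W1p T p y \<and>
            W1p_norm T p (\<lambda>t. y t - x t) < \<delta> \<longrightarrow>
            W1p_norm T p (\<lambda>t. calP T \<Phi> A F \<nu>1 \<nu>2 y t - calP T \<Phi> A F \<nu>1 \<nu>2 x t) < \<epsilon>))"
proof -
  interpret setting T p \<nu>1 \<nu>2 \<Phi> A F h1 h2 \<psi>
    by (unfold_locales; fact)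
  have part1: "\<forall>x. W1p T p x \<longrightarrow> W1p T p (calP T \<Phi> A F \<nu>1 \<nu>2 x)"
    unfolding W1p_def[of T p "calP T \<Phi> A F \<nu>1 \<nu>2 _"] using calP_W1p W1p_def by blast
  have part2: "\<exists>\<delta>>0. \<forall>y. W1p T p y \<and> W1p_norm T p (\<lambda>t. y t - x t) < \<delta> \<longrightarrow>
            W1p_norm T p (\<lambda>t. calP T \<Phi> A F \<nu>1 \<nu>2 y t - calP T \<Phi> A F \<nu>1 \<nu>2 x t) < \<epsilon>"
    if x: "W1p T p x" and e: "\<epsilon> > 0" for x \<epsilon>
  proof (rule ccontr)
    assume neg: "\<not> ?thesis"
    have "\<forall>n::nat. \<exists>y. W1p T p y \<and> W1p_norm T p (\<lambda>t. y t - x t) < inverse (real (Suc n)) \<and>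
            \<not> W1p_norm T p (\<lambda>t. calP T \<Phi> A F \<nu>1 \<nu>2 y t - calP T \<Phi> A F \<nu>1 \<nu>2 x t) < \<epsilon>"
    proof
      fix n :: nat
      have "inverse (real (Suc n)) > 0" by simp
      then show "\<exists>y. W1p T p y \<and> W1p_norm T p (\<lambda>t. y t - x t) < inverse (real (Suc n)) \<and>
            \<not> W1p_norm T p (\<lambda>t. calP T \<Phi> A F \<nu>1 \<nu>2 y t - calP T \<Phi> A F \<nu>1 \<nu>2 x t) < \<epsilon>"
        using neg by blast
    qed
    then obtain y where y: "\<And>n. W1p T p (y n)"
      "\<And>n. W1p_norm T p (\<lambda>t. y n t - x t) < inverse (real (Suc n))"
      "\<And>n. \<not> W1p_norm T p (\<lambda>t. calP T \<Phi> A F \<nu>1 \<nu>2 (y n) t - calP T \<Phi> A F \<nu>1 \<nu>2 x t) < \<epsilon>"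
      by metis
    have close: "eventually (\<lambda>n. W1p_norm T p (\<lambda>t. y n t - x t) < \<delta>) sequentially" if d: "\<delta> > 0" for \<delta>
    proof -
      obtain N where N: "inverse (real (Suc N)) < \<delta>" using reals_Archimedean[OF d] by blast
      show ?thesis unfolding eventually_sequentially
      proof (intro exI allI impI)
        fix n assume "N \<le> n"
        then have "inverse (real (Suc n)) \<le> inverse (real (Suc N))" by (simp add: le_imp_inverse_le)
        then show "W1p_norm T p (\<lambda>t. y n t - x t) < \<delta>" using y(2)[of n] N by linarith
      qed
    qed
    have "(\<lambda>n. W1p_norm T p (\<lambda>t. calP T \<Phi> A F \<nu>1 \<nu>2 (y n) t - calP T \<Phi> A F \<nu>1 \<nu>2 x t)) \<longlonglongrightarrow> 0"
      by (rule P_conv[OF x y(1) close])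
    then have "eventually (\<lambda>n. W1p_norm T p (\<lambda>t. calP T \<Phi> A F \<nu>1 \<nu>2 (y n) t - calP T \<Phi> A F \<nu>1 \<nu>2 x t) < \<epsilon>) sequentially"
      using e by (rule order_tendstoD(2))
    then obtain N where "\<And>n. N \<le> n \<Longrightarrow> W1p_norm T p (\<lambda>t. calP T \<Phi> A F \<nu>1 \<nu>2 (y n) t - calP T \<Phi> A F \<nu>1 \<nu>2 x t) < \<epsilon>"
      unfolding eventually_sequentially by blast
    then show False using y(3)[of N] by blast
  qed
  show ?thesis using part1 part2 by blast
qed


end
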